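(* Let $D\subset\mathbb{C}$ be a planar regular region bounded by finitely many analytic Jordan curves, and let $z_0\in D$. Then $$\frac{(c_\beta(z_0))^2}{\pi}=\lim_{r\to 0+0}\frac{r}{g_{z_0}(-\log r)},$$ where $c_\beta(z_0)=\lim_{z\to z_0}\exp\big(G(z,z_0)-\log|z-z_0|\big)$.
   Context: $G(z,w)$ is the Green's function of $D$: $G(\cdot,w)$ is harmonic on $D\setminus\{w\}$, $G(z,w)-\log|z-w|$ is harmonic near $w$, $G(\cdot,w)<0$ on $D$ and $G(\cdot,w)=0$ on $\partial D$. For $t\ge 0$, $$g_{w}(t)=\inf\Big\{\int_{\{2G(\cdot,w)<-t\}}|f|^2\,d\lambda:\ f \text{ holomorphic on } \{2G(\cdot,w)<-t\},\ f(w)=1\Big\},$$ with $\lambda$ Lebesgue measure on $\mathbb{C}$. *)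

theory Defs
  imports "HOL-Complex_Analysis.Complex_Analysis"
begin

definition harmonic_on :: "(complex \<Rightarrow> real) \<Rightarrow> complex set \<Rightarrow> bool" where
  "harmonic_on u U \<longleftrightarrow> open U \<and>
     (\<forall>z\<in>U. \<exists>r>0. ball z r \<subseteq> U \<and>
        (\<exists>f. f holomorphic_on ball z r \<and> (\<forall>x\<in>ball z r. u x = Re (f x))))"

definition analytic_jordan_curve :: "complex set \<Rightarrow> bool" where
  "analytic_jordan_curve \<Gamma> \<longleftrightarrow>
     (\<exists>f U. open U \<and> sphere 0 1 \<subseteq> U \<and> f holomorphic_on U \<and> inj_on f U \<and>
            \<Gamma> = f ` sphere 0 1)"

definition regular_region :: "complex set \<Rightarrow> bool" where
  "regular_region D \<longleftrightarrow> open D \<and> connected D \<and> bounded D \<and> D \<noteq> {} \<and>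
     (\<exists>\<C>. finite \<C> \<and> \<C> \<noteq> {} \<and> (\<forall>\<Gamma>\<in>\<C>. analytic_jordan_curve \<Gamma>) \<and>
          pairwise disjnt \<C> \<and> frontier D = \<Union>\<C>)"

definition green_function :: "complex set \<Rightarrow> (complex \<Rightarrow> complex \<Rightarrow> real) \<Rightarrow> bool" where
  "green_function D G \<longleftrightarrow> (\<forall>w\<in>D.
      harmonic_on (\<lambda>z. G z w) (D - {w}) \<and>
      (\<exists>r>0. ball w r \<subseteq> D \<and> (\<exists>h. harmonic_on h (ball w r) \<and>
            (\<forall>z\<in>ball w r - {w}. G z w - ln (cmod (z - w)) = h z))) \<and>
      (\<forall>z\<in>D - {w}. G z w < 0) \<and>
      (\<forall>\<zeta>\<in>frontier D. ((\<lambda>z. G z w) \<longlongrightarrow> 0) (at \<zeta> within D)))"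

definition sublevel :: "complex set \<Rightarrow> (complex \<Rightarrow> complex \<Rightarrow> real) \<Rightarrow> complex \<Rightarrow> real \<Rightarrow> complex set" where
  "sublevel D G w t = {z\<in>D. z = w \<or> 2 * G z w < - t}"

definition min_integral :: "complex set \<Rightarrow> (complex \<Rightarrow> complex \<Rightarrow> real) \<Rightarrow> complex \<Rightarrow> real \<Rightarrow> ennreal" where
  "min_integral D G w t = (INF f\<in>{f. f holomorphic_on sublevel D G w t \<and> f w = 1}.
      set_nn_integral lborel (sublevel D G w t) (\<lambda>z. ennreal ((cmod (f z))\<^sup>2)))"

end

theory Submission
  imports Defs
begin


definition c2v :: "complex \<Rightarrow> real^2" where "c2v z = (\<chi> i. if i = 1 then Re z else Im z)"
definition v2c :: "real^2 \<Rightarrow> complex" where "v2c v = Complex (v$1) (v$2)"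

lemma v2c_c2v[simp]: "v2c (c2v z) = z" by (simp add: v2c_def c2v_def)
lemma c2v_v2c[simp]: "c2v (v2c v) = v"
  unfolding v2c_def c2v_def by (simp add: vec_eq_iff forall_2)

lemma c2v_meas[measurable]: "c2v \<in> borel_measurable borel"
proof -
  have "continuous_on UNIV c2v" unfolding c2v_def
    apply (rule continuous_on_vec_lambda)
    subgoal for i by (cases "i = 1") (simp_all add: continuous_intros)
    done
  then show ?thesis by (rule borel_measurable_continuous_onI)
qed

lemma v2c_meas[measurable]: "v2c \<in> borel_measurable borel"
proof -
  have "continuous_on UNIV v2c" unfolding v2c_def Complex_eq
    by (intro continuous_intros)
  then show ?thesis by (rule borel_measurable_continuous_onI)
qed

lemma Basis_2: "(Basis :: (real^2) set) = {axis 1 1, axis 2 1}"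
    by (auto simp: Basis_vec_def axis_def UNIV_2)

lemma prod_Basis_2: "(\<Prod>b\<in>(Basis::(real^2) set). f b) = f (axis 1 1) * f (axis 2 1)"
  by (simp add: Basis_2 axis_eq_axis)

lemma distr_c2v: "distr lborel borel c2v = (lborel :: (real^2) measure)"
proof (rule lborel_eqI[symmetric])
  fix l u :: "real^2"
  assume le: "\<And>b. b \<in> Basis \<Longrightarrow> l \<bullet> b \<le> u \<bullet> b"
  have "c2v -` box l u = box (Complex (l$1) (l$2)) (Complex (u$1) (u$2))"
    by (auto simp: box_def c2v_def Basis_vec_def Basis_complex_def axis_def inner_vec_def UNIV_2 sum_2)
  then have "emeasure (distr lborel borel c2v) (box l u) = emeasure lborel (box (Complex (l$1) (l$2)) (Complex (u$1) (u$2)))"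
    by (simp add: emeasure_distr)
  also have "\<dots> = (u$1 - l$1) * (u$2 - l$2)"
    using le[of "axis 1 1"] le[of "axis 2 1"]
    by (subst emeasure_lborel_box_eq) (auto simp: Basis_complex_def Basis_vec_def inner_axis)
  also have "\<dots> = (\<Prod>b\<in>Basis. (u - l) \<bullet> b)"
    by (simp add: prod_Basis_2 inner_axis)
  finally show "emeasure (distr lborel borel c2v) (box l u) = (\<Prod>b\<in>Basis. (u - l) \<bullet> b)" .
qed simp

definition rot :: "complex \<Rightarrow> real^2 \<Rightarrow> real^2" where "rot w v = c2v (w * v2c v)"

lemma linear_rot: "linear (rot w)"
  by (rule linearI) (simp_all add: rot_def c2v_def v2c_def vec_eq_iff algebra_simps)

lemma det_rot: "det (matrix (rot w)) = (cmod w)^2"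
proof -
  have "det (matrix (rot w)) = Re w * Re w + Im w * Im w"
    by (simp add: det_2 matrix_def rot_def c2v_def v2c_def axis_def algebra_simps)
  also have "\<dots> = (cmod w)^2" by (metis cmod_power2 power2_eq_square add.commute)
  finally show ?thesis .
qed

lemma rot_meas[measurable]: "rot w \<in> borel_measurable borel"
  unfolding rot_def by measurable

lemma rot_rot: "cmod w = 1 \<Longrightarrow> rot (cnj w) (rot w v) = v"
proof -
  assume "cmod w = 1"
  then have "cnj w * w = 1" by (metis complex_norm_square mult.commute of_real_1 power_one)
  then show ?thesis by (simp add: rot_def mult.assoc[symmetric])
qed

lemma emeasure_leb_borel: "A \<in> sets borel \<Longrightarrow> emeasure lebesgue A = emeasure lborel A"
  by (simp add: emeasure_completion main_part_sets)

lemma distr_rot: assumes w: "cmod w = 1" shows "distr lborel borel (rot w) = (lborel :: (real^2) measure)"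
proof (rule lborel_eqI[symmetric])
  fix l u :: "real^2"
  assume le: "\<And>b. b \<in> Basis \<Longrightarrow> l \<bullet> b \<le> u \<bullet> b"
  have w': "cmod (cnj w) = 1" using w by simp
  have pre: "rot w -` box l u = rot (cnj w) ` box l u"
  proof (intro set_eqI iffI)
    fix x assume "x \<in> rot w -` box l u"
    then show "x \<in> rot (cnj w) ` box l u"
      using rot_rot[OF w'] rot_rot[OF w] by (intro image_eqI[of _ _ "rot w x"]) auto
  next
    fix x assume "x \<in> rot (cnj w) ` box l u"
    then show "x \<in> rot w -` box l u"
      using rot_rot[OF w'] by auto
  qed
  have mb: "rot w -` box l u \<in> sets borel"
  proof -
    have "rot w -` box l u \<inter> space borel \<in> sets borel"
      by (rule measurable_sets[OF rot_meas]) simp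
    then show ?thesis by simp
  qed
  have "emeasure (distr lborel borel (rot w)) (box l u) = emeasure lborel (rot w -` box l u)"
    by (simp add: emeasure_distr)
  also have "\<dots> = emeasure lebesgue (rot (cnj w) ` box l u)"
    using mb pre by (simp add: emeasure_leb_borel)
  also have "\<dots> = ennreal (measure lebesgue (rot (cnj w) ` box l u))"
    by (rule emeasure_eq_measure2) (rule measurable_linear_image[OF linear_rot]; simp)
  also have "measure lebesgue (rot (cnj w) ` box l u) = measure lebesgue (box l u)"
    by (subst measure_linear_image[OF linear_rot]) (simp_all add: det_rot w' w)
  also have "ennreal (measure lebesgue (box l u)) = emeasure lebesgue (box l u)"
    by (rule emeasure_eq_measure2[symmetric]) simp
  also have "\<dots> = emeasure lborel (box l u)"
    by (simp add: emeasure_leb_borel)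
  also have "\<dots> = (\<Prod>b\<in>Basis. (u - l) \<bullet> b)"
    using le by (simp add: emeasure_lborel_box_eq)
  finally show "emeasure (distr lborel borel (rot w)) (box l u) = (\<Prod>b\<in>Basis. (u - l) \<bullet> b)" .
qed simp

lemma lborel_C: "distr lborel borel v2c = (lborel :: complex measure)"
proof -
  have "distr lborel borel v2c = distr (distr (lborel :: complex measure) borel c2v) borel v2c"
    by (simp add: distr_c2v)
  also have "\<dots> = distr lborel borel (v2c \<circ> c2v)"
    by (rule distr_distr) simp_all
  also have "v2c \<circ> c2v = (\<lambda>x. x)" by (simp add: fun_eq_iff)
  also have "distr (lborel :: complex measure) borel (\<lambda>x. x) = lborel"
    by (rule distr_id2) simp
  finally show ?thesis .
qed

lemma distr_mult_complex: assumes w: "cmod w = 1"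
  shows "distr lborel borel (\<lambda>z. w * z) = (lborel :: complex measure)"
proof -
  have "distr lborel borel (\<lambda>z. w * z) = distr (distr lborel borel v2c) borel (\<lambda>z. w * z)"
    by (simp add: lborel_C)
  also have "\<dots> = distr lborel borel ((\<lambda>z. w * z) \<circ> v2c)"
    by (rule distr_distr) simp_all
  also have "(\<lambda>z. w * z) \<circ> v2c = v2c \<circ> rot w"
    by (simp add: fun_eq_iff rot_def)
  also have "distr lborel borel (v2c \<circ> rot w) = distr (distr lborel borel (rot w)) borel v2c"
    by (rule distr_distr[symmetric]) simp_all
  also have "\<dots> = lborel" by (simp add: distr_rot[OF w] lborel_C)
  finally show ?thesis .
qed

lemma nn_integral_rotate:
  assumes w: "cmod w = 1" and g: "g \<in> borel_measurable borel"
  shows "(\<integral>\<^sup>+ z. g (w * z) \<partial>lborel) = (\<integral>\<^sup>+ z. g z \<partial>(lborel :: complex measure))"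
proof -
  have "(\<integral>\<^sup>+ z. g z \<partial>(lborel :: complex measure)) = (\<integral>\<^sup>+ z. g z \<partial>(distr lborel borel (\<lambda>z. w * z)))"
    by (simp add: distr_mult_complex[OF w])
  also have "\<dots> = (\<integral>\<^sup>+ z. g (w * z) \<partial>lborel)"
    by (rule nn_integral_distr) (simp_all add: g)
  finally show ?thesis ..
qed

lemma nn_integral_translate:
  assumes g: "g \<in> borel_measurable borel"
  shows "(\<integral>\<^sup>+ z. g (a + z) \<partial>lborel) = (\<integral>\<^sup>+ z. g z \<partial>(lborel :: complex measure))"
proof -
  have "(\<integral>\<^sup>+ z. g z \<partial>(lborel :: complex measure)) = (\<integral>\<^sup>+ z. g z \<partial>(distr lborel borel ((+) a)))"
    by (simp add: lborel_distr_plus)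
  also have "\<dots> = (\<integral>\<^sup>+ z. g (a + z) \<partial>lborel)"
    by (rule nn_integral_distr) (simp_all add: g)
  finally show ?thesis ..
qed



lemma root_sum_zero:
  assumes "0 < m" "m < k"
  shows "(\<Sum>j<k. (cis (2*pi/k) ^ m) ^ j) = 0"
proof -
  let ?w = "cis (2*pi/k) ^ m"
  have k: "k > 0" using assms by simp
  have eq: "?w = cis (2 * pi * real m / real k)"
    by (subst Complex.DeMoivre) (simp add: field_simps)
  have "cis (2 * pi * real m / real k) \<noteq> cis (2 * pi * real 0 / real k)"
    using inj_onD[OF conjunct1[OF Complex.bij_betw_roots_unity[OF k, unfolded bij_betw_def]], of m 0] assms
    by auto
  then have ne: "?w \<noteq> 1" using eq by simp
  have "?w ^ k = cis (2*pi/k) ^ (k * m)" by (simp add: power_mult[symmetric] mult.commute)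
  also have "\<dots> = cis (2 * pi * real m)" using k by (simp add: Complex.DeMoivre field_simps)
  also have "\<dots> = 1" by (simp add: complex_eq_iff cos_eq_1 sin_eq_0)
  finally have wk: "?w ^ k = 1" .
  show ?thesis using ne wk by (subst geometric_sum) simp_all
qed

lemma avg_tendsto:
  assumes f: "f holomorphic_on ball 0 \<rho>" and z: "z \<in> ball 0 \<rho>"
  shows "(\<lambda>n. (\<Sum>j<Suc n. f (cis (2*pi/Suc n)^j * z)) / of_nat (Suc n)) \<longlonglongrightarrow> f 0"
proof -
  define c where "c m = (deriv ^^ m) f 0 / fact m" for m
  have ps: "(\<lambda>m. c m * y^m) sums f y" if "y \<in> ball 0 \<rho>" for y
    using holomorphic_power_series[OF f that] by (simp add: c_def)
  define s where "s = (norm z + \<rho>) / 2"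
  have zs: "norm z < s" "s < \<rho>" using z by (auto simp: s_def)
  have "summable (\<lambda>m. c m * (complex_of_real s)^m)"
  proof -
    have "0 \<le> s" using zs(1) norm_ge_zero[of z] by linarith
    then have "complex_of_real s \<in> ball 0 \<rho>" using zs by simp
    then show ?thesis using ps[of "complex_of_real s"] by (simp add: sums_iff)
  qed
  then have sa: "summable (\<lambda>m. norm (c m * z^m))"
    by (rule powser_insidea) (use zs in simp)
  define a where "a m = norm (c m * z^m)" for m
  have sa': "summable a" using sa unfolding a_def[abs_def] .
  have key: "norm ((\<Sum>j<Suc n. f (cis (2*pi/Suc n)^j * z)) / of_nat (Suc n) - f 0)
      \<le> suminf a - (\<Sum>i<Suc n. a i)" for n
  proof -
    define k where "k = Suc n"
    define \<omega> where "\<omega> = cis (2*pi/k)"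
    have k: "k > 0" by (simp add: k_def)
    have nw: "norm \<omega> = 1" by (simp add: \<omega>_def)
    have inb: "\<omega>^j * z \<in> ball 0 \<rho>" for j
      using z by (simp add: norm_mult norm_power nw)
    define E where "E m = (\<Sum>j<k. (\<omega>^m)^j) / of_nat k" for m
    define d where "d m = c m * z^m * E m" for m
    define A where "A = (\<Sum>j<k. f (\<omega>^j * z)) / of_nat k"
    have "(\<lambda>m. \<Sum>j<k. c m * (\<omega>^j * z)^m) sums (\<Sum>j<k. f (\<omega>^j * z))"
      by (rule sums_sum) (rule ps[OF inb])
    then have "(\<lambda>m. (\<Sum>j<k. c m * (\<omega>^j * z)^m) / of_nat k) sums A"
      unfolding A_def by (rule sums_divide)
    moreover have "(\<Sum>j<k. c m * (\<omega>^j * z)^m) / of_nat k = d m" for m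
      by (simp add: d_def E_def sum_distrib_left sum_divide_distrib power_mult_distrib
          power_mult[symmetric] mult.commute mult.left_commute)
    ultimately have dA: "d sums A" by simp
    have E0: "E 0 = 1" using k by (simp add: E_def)
    have Em: "E m = 0" if "0 < m" "m < k" for m
      using root_sum_zero[OF that] by (simp add: E_def \<omega>_def)
    have Eb: "norm (E m) \<le> 1" for m
    proof -
      have "norm (\<Sum>j<k. (\<omega>^m)^j) \<le> (\<Sum>j<k. norm ((\<omega>^m)^j))" by (rule norm_sum)
      also have "\<dots> = of_nat k" by (simp add: norm_power nw)
      finally show ?thesis using k by (simp add: E_def norm_divide)
    qed
    have sumd: "(\<Sum>i<k. d i) = f 0"
    proof -
      have "(\<Sum>i<k. d i) = d 0 + (\<Sum>i\<in>{1..<k}. d i)"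
        using k by (simp add: lessThan_atLeast0 sum.atLeast_Suc_lessThan)
      also have "(\<Sum>i\<in>{1..<k}. d i) = 0"
        by (rule sum.neutral) (auto simp: d_def Em)
      also have "d 0 = f 0" by (simp add: d_def E0 c_def)
      finally show ?thesis by simp
    qed
    have "(\<lambda>i. d (i + k)) sums (A - f 0)"
      using dA sumd by (subst sums_iff_shift) simp
    then have "norm (A - f 0) = norm (\<Sum>i. d (i + k))" by (simp add: sums_iff)
    also have "\<dots> \<le> (\<Sum>i. a (i + k))"
    proof (rule norm_suminf_le)
      show "norm (d (i + k)) \<le> a (i + k)" for i
        using Eb[of "i+k"] by (simp add: d_def a_def norm_mult mult_left_le)
      show "summable (\<lambda>i. a (i + k))" using sa' by (simp add: summable_iff_shift)
    qed
    also have "\<dots> = suminf a - (\<Sum>i<k. a i)"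
      using suminf_split_initial_segment[OF sa', of k] by simp
    finally show ?thesis by (simp add: A_def k_def \<omega>_def)
  qed
  have "(\<lambda>n. suminf a - (\<Sum>i<Suc n. a i)) \<longlonglongrightarrow> suminf a - suminf a"
    by (intro tendsto_diff tendsto_const) (rule LIMSEQ_Suc[OF summable_LIMSEQ[OF sa']])
  then have "(\<lambda>n. (\<Sum>j<Suc n. f (cis (2*pi/Suc n)^j * z)) / of_nat (Suc n) - f 0) \<longlonglongrightarrow> 0"
    by (intro Lim_null_comparison[OF always_eventually[OF allI[OF key]]]) simp
  then show ?thesis by (rule LIM_zero_cancel)
qed



lemma cs: fixes w :: "nat \<Rightarrow> complex" assumes k: "k > 0"
  shows "(cmod ((\<Sum>j<k. w j) / of_nat k))^2 \<le> (\<Sum>j<k. (cmod (w j))^2) / of_nat k"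
proof -
  have "(cmod (\<Sum>j<k. w j))^2 \<le> (\<Sum>j<k. cmod (w j))^2"
    by (intro power_mono norm_sum) simp
  also have "\<dots> \<le> (\<Sum>j<k. (cmod (w j))^2) * of_nat k"
    using sum_squared_le_sum_of_squares[of "\<lambda>j. cmod (w j)" "{..<k}"] by simp
  finally have "(cmod (\<Sum>j<k. w j))^2 \<le> (\<Sum>j<k. (cmod (w j))^2) * of_nat k" .
  then show ?thesis using k
    by (simp add: norm_divide power_divide field_simps power2_eq_square)
qed

lemma meas_ind:
  assumes "open U" "continuous_on U F"
  shows "(\<lambda>z. ennreal (indicator U z * (cmod (F z))^2)) \<in> borel_measurable borel"
proof -
  have "continuous_on U (\<lambda>z. (cmod (F z))^2)"
    by (intro continuous_intros assms)
  then have "(\<lambda>z. indicator U z *\<^sub>R (cmod (F z))^2) \<in> borel_measurable borel"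
    by (rule borel_measurable_continuous_on_indicator[rotated]) (simp add: assms)
  then show ?thesis by simp
qed

lemma LB0:
  assumes f: "f holomorphic_on ball 0 \<rho>" and \<rho>: "\<rho> > 0"
  shows "ennreal (pi * \<rho>^2 * (cmod (f 0))^2) \<le>
         (\<integral>\<^sup>+ z. ennreal (indicator (ball 0 \<rho>) z * (cmod (f z))^2) \<partial>lborel)"
proof -
  define B where "B = ball (0::complex) \<rho>"
  define g where "g z = ennreal (indicator B z * (cmod (f z))^2)" for z
  define I where "I = (\<integral>\<^sup>+ z. g z \<partial>lborel)"
  have fc: "continuous_on B f" using holomorphic_on_imp_continuous_on[OF f] by (simp add: B_def)
  have gm: "g \<in> borel_measurable borel"
    unfolding g_def[abs_def] by (rule meas_ind) (simp_all add: B_def fc[unfolded B_def])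
  define \<omega> where "\<omega> n = cis (2*pi/Suc n)" for n
  have nw: "cmod (\<omega> n ^ j) = 1" for n j by (simp add: \<omega>_def norm_power)
  have inB: "\<omega> n ^ j * z \<in> B \<longleftrightarrow> z \<in> B" for n j z
    by (simp add: B_def norm_mult nw)
  define A where "A n z = (\<Sum>j<Suc n. f (\<omega> n ^ j * z)) / of_nat (Suc n)" for n z
  define u where "u n z = ennreal (indicator B z * (cmod (A n z))^2)" for n z
  have Ac: "continuous_on B (A n)" for n
  proof -
    have "continuous_on B (\<lambda>z. f (\<omega> n ^ j * z))" for j
      by (rule continuous_on_compose2[OF fc]) (auto intro!: continuous_intros simp: inB)
    then show ?thesis unfolding A_def by (intro continuous_intros) (auto simp del: of_nat_Suc)
  qed
  have um: "u n \<in> borel_measurable borel" for n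
    unfolding u_def[abs_def] by (rule meas_ind) (simp_all add: B_def Ac[unfolded B_def])
  have rotI: "(\<integral>\<^sup>+ z. g (\<omega> n ^ j * z) \<partial>lborel) = I" for n j
    unfolding I_def by (rule nn_integral_rotate[OF nw gm])
  have ubound: "(\<integral>\<^sup>+ z. u n z \<partial>lborel) \<le> I" for n
  proof -
    let ?k = "Suc n"
    have pw: "u n z \<le> ennreal (1 / real ?k) * (\<Sum>j<?k. g (\<omega> n ^ j * z))" for z
    proof (cases "z \<in> B")
      case True
      have "(cmod (A n z))^2 \<le> (\<Sum>j<?k. (cmod (f (\<omega> n ^ j * z)))^2) / of_nat ?k"
        unfolding A_def by (rule cs) simp
      then have "u n z \<le> ennreal ((\<Sum>j<?k. (cmod (f (\<omega> n ^ j * z)))^2) / of_nat ?k)"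
        using True by (simp add: u_def ennreal_leI del: of_nat_Suc)
      also have "\<dots> = ennreal (1 / real ?k) * ennreal (\<Sum>j<?k. (cmod (f (\<omega> n ^ j * z)))^2)"
      proof -
        define S where "S = (\<Sum>j<?k. (cmod (f (\<omega> n ^ j * z)))^2)"
        have S0: "0 \<le> S" unfolding S_def by (rule sum_nonneg) simp
        have "ennreal (S / real ?k) = ennreal (1 / real ?k * S)" by simp
        also have "\<dots> = ennreal (1 / real ?k) * ennreal S" by (rule ennreal_mult) (simp_all add: S0)
        finally show ?thesis unfolding S_def .
      qed
      also have "ennreal (\<Sum>j<?k. (cmod (f (\<omega> n ^ j * z)))^2) = (\<Sum>j<?k. g (\<omega> n ^ j * z))"
      proof -
        have "ennreal (\<Sum>j<?k. (cmod (f (\<omega> n ^ j * z)))^2) = (\<Sum>j<?k. ennreal ((cmod (f (\<omega> n ^ j * z)))^2))"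
          by (rule sum_ennreal[symmetric]) simp
        also have "\<dots> = (\<Sum>j<?k. g (\<omega> n ^ j * z))"
          by (rule sum.cong) (simp_all add: g_def inB True)
        finally show ?thesis .
      qed
      finally show ?thesis .
    qed (simp add: u_def)
    have "(\<integral>\<^sup>+ z. u n z \<partial>lborel) \<le> (\<integral>\<^sup>+ z. ennreal (1 / real ?k) * (\<Sum>j<?k. g (\<omega> n ^ j * z)) \<partial>lborel)"
      by (rule nn_integral_mono) (rule pw)
    also have "\<dots> = ennreal (1 / real ?k) * (\<integral>\<^sup>+ z. (\<Sum>j<?k. g (\<omega> n ^ j * z)) \<partial>lborel)"
      by (rule nn_integral_cmult) (use gm in measurable)
    also have "(\<integral>\<^sup>+ z. (\<Sum>j<?k. g (\<omega> n ^ j * z)) \<partial>lborel) = (\<Sum>j<?k. (\<integral>\<^sup>+ z. g (\<omega> n ^ j * z) \<partial>lborel))"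
      by (rule nn_integral_sum) (use gm in measurable)
    also have "\<dots> = of_nat ?k * I" by (simp add: rotI)
    also have "ennreal (1 / real ?k) * (of_nat ?k * I) = I"
      by (simp add: mult.assoc[symmetric] ennreal_of_nat_eq_real_of_nat ennreal_mult[symmetric] del: of_nat_Suc)
    finally show ?thesis .
  qed
  have lim: "(\<lambda>n. u n z) \<longlonglongrightarrow> ennreal (indicator B z * (cmod (f 0))^2)" for z
  proof (cases "z \<in> B")
    case True
    have "(\<lambda>n. A n z) \<longlonglongrightarrow> f 0"
      using avg_tendsto[OF f True[unfolded B_def]] by (simp add: A_def \<omega>_def)
    then have "(\<lambda>n. ennreal ((cmod (A n z))^2)) \<longlonglongrightarrow> ennreal ((cmod (f 0))^2)"
      by (intro tendsto_ennrealI tendsto_intros)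
    then show ?thesis using True by (simp add: u_def)
  qed (simp add: u_def)
  have "(\<integral>\<^sup>+ z. ennreal (indicator B z * (cmod (f 0))^2) \<partial>lborel) = (\<integral>\<^sup>+ z. liminf (\<lambda>n. u n z) \<partial>lborel)"
    by (intro nn_integral_cong) (simp add: lim_imp_Liminf[OF trivial_limit_sequentially lim])
  also have "\<dots> \<le> liminf (\<lambda>n. (\<integral>\<^sup>+ z. u n z \<partial>lborel))"
    by (rule nn_integral_liminf) (simp add: um measurable_lborel1)
  also have "\<dots> \<le> I"
    by (rule Liminf_le) (simp_all add: ubound)
  finally have le: "(\<integral>\<^sup>+ z. ennreal (indicator B z * (cmod (f 0))^2) \<partial>lborel) \<le> I" .
  have "(\<integral>\<^sup>+ z. ennreal (indicator B z * (cmod (f 0))^2) \<partial>lborel)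
        = (\<integral>\<^sup>+ z. ennreal ((cmod (f 0))^2) * indicator B z \<partial>lborel)"
    by (intro nn_integral_cong) (simp add: indicator_def)
  also have "\<dots> = ennreal ((cmod (f 0))^2) * emeasure lborel B"
    by (rule nn_integral_cmult_indicator) (simp add: B_def)
  also have "emeasure lborel B = ennreal (pi * \<rho>^2)"
    using \<rho> by (simp add: B_def emeasure_ball unit_ball_vol_2)
  finally show ?thesis using le
    by (simp add: I_def g_def B_def ennreal_mult[symmetric] mult_ac)
qed



lemma harmonic_cont: assumes "harmonic_on u U" shows "continuous_on U u"
proof -
  have U: "open U" using assms by (simp add: harmonic_on_def)
  show ?thesis unfolding continuous_on_eq_continuous_at[OF U]
  proof
    fix z assume z: "z \<in> U"
    then obtain r f where r: "r > 0" "ball z r \<subseteq> U" and f: "f holomorphic_on ball z r"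
      and uf: "\<forall>x\<in>ball z r. u x = Re (f x)"
      using assms by (auto simp: harmonic_on_def)
    have "continuous_on (ball z r) (\<lambda>x. Re (f x))"
      by (intro continuous_intros holomorphic_on_imp_continuous_on[OF f])
    then have "continuous_on (ball z r) u"
      using uf by (metis (mono_tags, lifting) continuous_on_cong)
    then show "isCont u z"
      using r by (simp add: continuous_on_eq_continuous_at)
  qed
qed

lemma bdd_below_away:
  fixes u :: "complex \<Rightarrow> real"
  assumes D: "bounded D" "open D" and contG: "continuous_on (D - {z0}) u"
    and bd: "\<forall>\<zeta>\<in>frontier D. (u \<longlongrightarrow> 0) (at \<zeta> within D)" and \<delta>: "\<delta> > 0"
  shows "\<exists>M. \<forall>z\<in>D. \<delta> \<le> dist z z0 \<longrightarrow> -M \<le> u z"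
proof -
  define K where "K = closure D \<inter> {z. \<delta> \<le> dist z z0}"
  have cK: "compact K" unfolding K_def
    by (intro compact_Int_closed closed_Collect_le continuous_intros) (simp add: compact_closure D)
  show ?thesis
  proof (cases "K = {}")
    case True
    then show ?thesis using closure_subset[of D] by (auto simp: K_def)
  next
    case False
    define F where "F z = (if z \<in> D then u z else 0)" for z
    have "continuous_on K F"
      unfolding continuous_on_eq_continuous_within
    proof
      fix p assume pK: "p \<in> K"
      show "continuous (at p within K) F"
      proof (cases "p \<in> D")
        case True
        have "p \<noteq> z0" using pK \<delta> by (auto simp: K_def)
        then have "isCont u p"
          using contG True D(2) by (simp add: continuous_on_eq_continuous_at open_delete)
        moreover have "\<forall>\<^sub>F x in nhds p. F x = u x"
          using True D(2) by (auto simp: F_def eventually_nhds)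
        ultimately have "isCont F p" using isCont_cong by blast
        then show ?thesis by (rule continuous_at_imp_continuous_at_within)
      next
        case False
        then have "p \<in> frontier D" using pK D(2) by (auto simp: K_def frontier_def interior_open)
        then have lim: "(u \<longlongrightarrow> 0) (at p within D)" using bd by auto
        have Fp: "F p = 0" using False by (simp add: F_def)
        show ?thesis unfolding continuous_within Fp Lim_within
        proof (intro allI impI)
          fix e :: real assume "e > 0"
          then obtain d where d: "d > 0" "\<forall>x\<in>D. 0 < dist x p \<and> dist x p < d \<longrightarrow> dist (u x) 0 < e"
            using lim unfolding Lim_within by blast
          then show "\<exists>d>0. \<forall>x\<in>K. 0 < dist x p \<and> dist x p < d \<longrightarrow> dist (F x) 0 < e"
            using \<open>e > 0\<close> by (intro exI[of _ d]) (auto simp: F_def)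
        qed
      qed
    qed
    then obtain x where x: "x \<in> K" "\<forall>y\<in>K. F x \<le> F y"
      using continuous_attains_inf[OF cK False] by blast
    show ?thesis
    proof (intro exI[of _ "- F x"] ballI impI)
      fix z assume "z \<in> D" "\<delta> \<le> dist z z0"
      then have "z \<in> K" using closure_subset[of D] by (auto simp: K_def)
      then show "- (- F x) \<le> u z" using x \<open>z \<in> D\<close> by (auto simp: F_def)
    qed
  qed
qed



lemma LB:
  assumes f: "f holomorphic_on ball a \<rho>" and \<rho>: "\<rho> > 0"
  shows "ennreal (pi * \<rho>^2 * (cmod (f a))^2) \<le> set_nn_integral lborel (ball a \<rho>) (\<lambda>z. ennreal ((cmod (f z))^2))"
proof -
  have "(f \<circ> (\<lambda>z. a + z)) holomorphic_on ball 0 \<rho>"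
    by (rule holomorphic_on_compose_gen[of _ _ _ "ball a \<rho>"])
       (auto intro!: holomorphic_intros f simp: dist_norm)
  then have h: "(\<lambda>z. f (a + z)) holomorphic_on ball 0 \<rho>" by (simp add: o_def)
  define Gf where "Gf w = ennreal (indicator (ball a \<rho>) w * (cmod (f w))^2)" for w
  have Gm: "Gf \<in> borel_measurable borel"
    unfolding Gf_def[abs_def]
    by (rule meas_ind) (simp_all add: holomorphic_on_imp_continuous_on[OF f])
  have "ennreal (pi * \<rho>^2 * (cmod (f a))^2) \<le> (\<integral>\<^sup>+ z. ennreal (indicator (ball 0 \<rho>) z * (cmod (f (a + z)))^2) \<partial>lborel)"
    using LB0[OF h \<rho>] by simp
  also have "\<dots> = (\<integral>\<^sup>+ z. Gf (a + z) \<partial>lborel)"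
    by (intro nn_integral_cong) (simp add: Gf_def indicator_def dist_norm)
  also have "\<dots> = (\<integral>\<^sup>+ z. Gf z \<partial>lborel)"
    by (rule nn_integral_translate[OF Gm])
  also have "\<dots> = set_nn_integral lborel (ball a \<rho>) (\<lambda>z. ennreal ((cmod (f z))^2))"
    by (intro nn_integral_cong) (simp add: Gf_def indicator_def)
  finally show ?thesis .
qed

lemma exists_eta1:
  fixes y T :: real assumes "y < T"
  shows "\<exists>\<eta>>0. y < T * exp (-2*\<eta>)"
proof -
  have "((\<lambda>\<eta>. T * exp (-2*\<eta>)) \<longlongrightarrow> T) (at_right 0)"
    by (auto intro!: tendsto_eq_intros)
  then have "eventually (\<lambda>\<eta>. y < T * exp (-2*\<eta>)) (at_right 0)"
    using assms by (rule order_tendstoD(1))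
  then have "eventually (\<lambda>\<eta>. 0 < \<eta> \<and> y < T * exp (-2*\<eta>)) (at_right (0::real))"
    using eventually_at_right_less[of "0::real"] by eventually_elim simp
  then show ?thesis using eventually_happens'[OF trivial_limit_at_right_real] by blast
qed

lemma exists_eta2:
  fixes y T :: real assumes "T < y"
  shows "\<exists>\<eta>>0. T * exp (2*\<eta>) < y"
proof -
  have "((\<lambda>\<eta>. T * exp (2*\<eta>)) \<longlongrightarrow> T) (at_right 0)"
    by (auto intro!: tendsto_eq_intros)
  then have "eventually (\<lambda>\<eta>. T * exp (2*\<eta>) < y) (at_right 0)"
    using assms by (rule order_tendstoD(2))
  then have "eventually (\<lambda>\<eta>. 0 < \<eta> \<and> T * exp (2*\<eta>) < y) (at_right (0::real))"
    using eventually_at_right_less[of "0::real"] by eventually_elim simp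
  then show ?thesis using eventually_happens'[OF trivial_limit_at_right_real] by blast
qed

lemma e1: fixes r a \<eta> :: real assumes "0 < r"
  shows "r / (pi * r * exp (-2*a) * exp (2*\<eta>)) = (exp a)^2 / pi * exp (-2*\<eta>)"
proof -
  have A: "exp (-2*a) = inverse ((exp a)^2)"
    by (metis exp_minus exp_of_nat_mult mult_minus_left of_nat_numeral)
  have B: "exp (-2*\<eta>) = inverse (exp (2*\<eta>))"
    by (metis exp_minus mult_minus_left)
  show ?thesis unfolding A B using assms by (simp add: divide_simps)
qed

lemma e2: fixes r a \<eta> :: real assumes "0 < r"
  shows "r / (pi * r * exp (-2*a) * exp (-2*\<eta>)) = (exp a)^2 / pi * exp (2*\<eta>)"
proof -
  have A: "exp (-2*a) = inverse ((exp a)^2)"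
    by (metis exp_minus exp_of_nat_mult mult_minus_left of_nat_numeral)
  have B: "exp (-2*\<eta>) = inverse (exp (2*\<eta>))"
    by (metis exp_minus mult_minus_left)
  show ?thesis unfolding A B using assms by (simp add: divide_simps)
qed



theorem lemma2p6:
  fixes D :: "complex set" and G :: "complex \<Rightarrow> complex \<Rightarrow> real" and z0 :: complex
  assumes "regular_region D" and "green_function D G" and "z0 \<in> D"
  shows "\<exists>c. ((\<lambda>z. exp (G z z0 - ln (cmod (z - z0)))) \<longlongrightarrow> c) (at z0) \<and>
             ((\<lambda>r. ennreal r / min_integral D G z0 (- ln r)) \<longlongrightarrow> ennreal (c\<^sup>2 / pi)) (at_right 0)"
proof -
  have D: "open D" "bounded D" using assms(1) by (auto simp: regular_region_def)
  have harm: "harmonic_on (\<lambda>z. G z z0) (D - {z0})"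
    and bd: "\<forall>\<zeta>\<in>frontier D. ((\<lambda>z. G z z0) \<longlongrightarrow> 0) (at \<zeta> within D)"
    using assms(2,3) by (auto simp: green_function_def)
  obtain r0 h where r0: "r0 > 0" "ball z0 r0 \<subseteq> D" and hh: "harmonic_on h (ball z0 r0)"
    and heq: "\<forall>z\<in>ball z0 r0 - {z0}. G z z0 - ln (cmod (z - z0)) = h z"
    using assms(2,3) unfolding green_function_def by blast
  have contG: "continuous_on (D - {z0}) (\<lambda>z. G z z0)" by (rule harmonic_cont[OF harm])
  have hc: "isCont h z0"
    using harmonic_cont[OF hh] r0(1) by (simp add: continuous_on_eq_continuous_at)
  define a where "a = h z0"
  define T where "T = (exp a)^2 / pi"
  have T0: "T > 0" by (simp add: T_def)
  have lim1: "((\<lambda>z. exp (G z z0 - ln (cmod (z - z0)))) \<longlongrightarrow> exp a) (at z0)"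
  proof -
    have "isCont (\<lambda>z. exp (h z)) z0" by (intro continuous_intros hc)
    then have "((\<lambda>z. exp (h z)) \<longlongrightarrow> exp a) (at z0)" by (simp add: isCont_def a_def)
    moreover have "\<forall>\<^sub>F z in at z0. exp (h z) = exp (G z z0 - ln (cmod (z - z0)))"
      unfolding eventually_at using r0(1) heq
      by (intro exI[of _ r0]) (auto simp: dist_commute)
    ultimately show ?thesis by (rule Lim_transform_eventually)
  qed
  define gq where "gq r = min_integral D G z0 (- ln r)" for r
  have KEY: "eventually (\<lambda>r. \<exists>m. gq r = ennreal m \<and> pi * r * exp (-2*a) * exp (-2*\<eta>) \<le> m
              \<and> m \<le> pi * r * exp (-2*a) * exp (2*\<eta>) \<and> 0 < r) (at_right 0)" if \<eta>: "\<eta> > 0" for \<eta>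
  proof -
    obtain d where d: "d > 0" "\<forall>z. dist z z0 < d \<longrightarrow> dist (h z) (h z0) < \<eta>"
      using hc \<eta> unfolding continuous_at_eps_delta by blast
    define \<delta> where "\<delta> = min d r0"
    have \<delta>: "\<delta> > 0" "\<delta> \<le> d" "\<delta> \<le> r0" using d r0 by (auto simp: \<delta>_def)
    obtain M where M: "\<forall>z\<in>D. \<delta> \<le> dist z z0 \<longrightarrow> -M \<le> G z z0"
      using bdd_below_away[OF D(2) D(1) contG bd \<delta>(1)] by blast
    have hb: "G z z0 = ln (cmod (z - z0)) + h z \<and> \<bar>h z - a\<bar> < \<eta>"
      if "z \<in> ball z0 \<delta>" "z \<noteq> z0" for z
    proof -
      have "z \<in> ball z0 r0 - {z0}" using that \<delta> by auto
      then have "G z z0 = ln (cmod (z - z0)) + h z" using heq by force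
      moreover have "dist z z0 < d" using that \<delta> by (auto simp: dist_commute)
      then have "\<bar>h z - a\<bar> < \<eta>" using d(2) by (auto simp: a_def dist_real_def)
      ultimately show ?thesis by simp
    qed
    have ev1: "eventually (\<lambda>r. ln r < -2*M) (at_right (0::real))"
      using ln_at_0 unfolding filterlim_at_bot_dense by blast
    have ev2: "eventually (\<lambda>r. ln r < 2*(ln \<delta> + a - \<eta>)) (at_right (0::real))"
      using ln_at_0 unfolding filterlim_at_bot_dense by blast
    show ?thesis
      using ev1 ev2 eventually_at_right_less[of "0::real"]
    proof eventually_elim
      case (elim r)
      then have r: "0 < r" "ln r < -2*M" "ln r < 2*(ln \<delta> + a - \<eta>)" by auto
      define L where "L = ln r / 2"
      define \<rho>1 where "\<rho>1 = exp (L - a - \<eta>)"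
      define \<rho>2 where "\<rho>2 = exp (L - a + \<eta>)"
      define S where "S = sublevel D G z0 (- ln r)"
      have Sdef: "z \<in> S \<longleftrightarrow> z \<in> D \<and> (z = z0 \<or> 2 * G z z0 < ln r)" for z
        by (simp add: S_def sublevel_def)
      have \<rho>2\<delta>: "\<rho>2 < \<delta>"
      proof -
        have "L - a + \<eta> < ln \<delta>" using r(3) by (simp add: L_def)
        then have "\<rho>2 < exp (ln \<delta>)" unfolding \<rho>2_def by simp
        then show ?thesis using \<delta>(1) by simp
      qed
      have \<rho>12: "\<rho>1 < \<rho>2" "0 < \<rho>1" using \<eta> by (simp_all add: \<rho>1_def \<rho>2_def)
      have inner: "ball z0 \<rho>1 \<subseteq> S"
      proof
        fix z assume z: "z \<in> ball z0 \<rho>1"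
        show "z \<in> S"
        proof (cases "z = z0")
          case True then show ?thesis using assms(3) by (simp add: Sdef)
        next
          case False
          have zd: "z \<in> ball z0 \<delta>" using z \<rho>12 \<rho>2\<delta> by simp
          then have zD: "z \<in> D" using r0(2) \<delta>(3) by auto
          have n0: "0 < cmod (z - z0)" using False by simp
          have "cmod (z - z0) < \<rho>1" using z by (simp add: dist_norm norm_minus_commute)
          then have "ln (cmod (z - z0)) < ln \<rho>1" by (rule ln_less_cancel_iff[OF n0 \<rho>12(2), THEN iffD2])
          also have "ln \<rho>1 = L - a - \<eta>" by (simp add: \<rho>1_def)
          finally have "G z z0 < L" using hb[OF zd False] by linarith
          then show ?thesis using zD by (simp add: Sdef L_def)
        qed
      qed
      have outer: "S \<subseteq> ball z0 \<rho>2"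
      proof
        fix z assume z: "z \<in> S"
        show "z \<in> ball z0 \<rho>2"
        proof (cases "z = z0")
          case True then show ?thesis using \<rho>12 by simp
        next
          case False
          then have zD: "z \<in> D" and lt: "2 * G z z0 < ln r" using z by (auto simp: Sdef)
          have "dist z z0 < \<delta>"
          proof (rule ccontr)
            assume "\<not> dist z z0 < \<delta>"
            then have "-M \<le> G z z0" using M zD by auto
            then show False using lt r(2) by linarith
          qed
          then have zd: "z \<in> ball z0 \<delta>" by (simp add: dist_commute)
          have n0: "0 < cmod (z - z0)" using False by simp
          have "ln (cmod (z - z0)) < L - a + \<eta>"
            using hb[OF zd False] lt by (simp add: L_def) linarith
          then have "cmod (z - z0) < exp (L - a + \<eta>)" using n0
            by (metis exp_less_mono exp_ln)
          then show ?thesis by (simp add: \<rho>2_def dist_norm norm_minus_commute)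
        qed
      qed
      have sq: "(exp x)^2 = exp (2*x)" for x :: real
        by (metis exp_of_nat_mult of_nat_numeral)
      have \<rho>1sq: "\<rho>1^2 = r * exp (-2*a) * exp (-2*\<eta>)"
      proof -
        have "\<rho>1^2 = exp (2*(L - a - \<eta>))" unfolding \<rho>1_def sq ..
        also have "2*(L - a - \<eta>) = ln r + (-2*a) + (-2*\<eta>)" by (simp add: L_def algebra_simps)
        also have "exp (ln r + (-2*a) + (-2*\<eta>)) = r * exp (-2*a) * exp (-2*\<eta>)"
          unfolding exp_add using r(1) by simp
        finally show ?thesis .
      qed
      have \<rho>2sq: "\<rho>2^2 = r * exp (-2*a) * exp (2*\<eta>)"
      proof -
        have "\<rho>2^2 = exp (2*(L - a + \<eta>))" unfolding \<rho>2_def sq ..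
        also have "2*(L - a + \<eta>) = ln r + (-2*a) + (2*\<eta>)" by (simp add: L_def algebra_simps)
        also have "exp (ln r + (-2*a) + (2*\<eta>)) = r * exp (-2*a) * exp (2*\<eta>)"
          unfolding exp_add using r(1) by simp
        finally show ?thesis .
      qed
      have adm1: "(\<lambda>_. 1) \<in> {f. f holomorphic_on S \<and> f z0 = 1}" by simp
      have upper: "gq r \<le> ennreal (pi * \<rho>2^2)"
      proof -
        have "gq r \<le> set_nn_integral lborel S (\<lambda>z. ennreal ((cmod ((\<lambda>_. 1::complex) z))\<^sup>2))"
          unfolding gq_def min_integral_def S_def[symmetric] by (rule INF_lower[OF adm1])
        also have "\<dots> \<le> (\<integral>\<^sup>+ z. indicator (ball z0 \<rho>2) z \<partial>lborel)"
          using outer by (intro nn_integral_mono) (auto simp: indicator_def)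
        also have "\<dots> = emeasure lborel (ball z0 \<rho>2)" by simp
        also have "\<dots> = ennreal (pi * \<rho>2^2)"
          using \<rho>12 by (simp add: emeasure_ball unit_ball_vol_2 mult.commute)
        finally show ?thesis .
      qed
      have lower: "ennreal (pi * \<rho>1^2) \<le> gq r"
        unfolding gq_def min_integral_def S_def[symmetric]
      proof (rule INF_greatest)
        fix f assume "f \<in> {f. f holomorphic_on S \<and> f z0 = 1}"
        then have f: "f holomorphic_on S" "f z0 = 1" by auto
        have "ennreal (pi * \<rho>1^2) = ennreal (pi * \<rho>1^2 * (cmod (f z0))^2)" using f(2) by simp
        also have "\<dots> \<le> set_nn_integral lborel (ball z0 \<rho>1) (\<lambda>z. ennreal ((cmod (f z))^2))"
          by (rule LB[OF holomorphic_on_subset[OF f(1) inner] \<rho>12(2)])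
        also have "\<dots> \<le> set_nn_integral lborel S (\<lambda>z. ennreal ((cmod (f z))^2))"
          using inner by (intro nn_integral_mono) (auto simp: indicator_def)
        finally show "ennreal (pi * \<rho>1^2) \<le> set_nn_integral lborel S (\<lambda>z. ennreal ((cmod (f z))^2))" .
      qed
      obtain m where m: "gq r = ennreal m" "0 \<le> m"
        using upper by (cases "gq r" rule: ennreal_cases) (auto simp: top_unique)
      have "pi * \<rho>1^2 \<le> m" using lower m by (simp add: ennreal_le_iff)
      then have m1: "pi * r * exp (-2*a) * exp (-2*\<eta>) \<le> m" unfolding \<rho>1sq by (simp add: mult.assoc)
      have "m \<le> pi * \<rho>2^2" using upper m by (simp add: ennreal_le_iff)
      then have m2: "m \<le> pi * r * exp (-2*a) * exp (2*\<eta>)" unfolding \<rho>2sq by (simp add: mult.assoc)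
      show ?case using m(1) m1 m2 r(1) by blast
    qed
  qed
  have KEY2: "eventually (\<lambda>r. \<exists>q. ennreal r / gq r = ennreal q \<and> T * exp (-2*\<eta>) \<le> q
              \<and> q \<le> T * exp (2*\<eta>)) (at_right 0)" if \<eta>: "\<eta> > 0" for \<eta>
    using KEY[OF \<eta>]
  proof eventually_elim
    case (elim r)
    then obtain m where m: "gq r = ennreal m" "pi * r * exp (-2*a) * exp (-2*\<eta>) \<le> m"
      "m \<le> pi * r * exp (-2*a) * exp (2*\<eta>)" "0 < r" by blast
    have lpos: "0 < pi * r * exp (-2*a) * exp (-2*\<eta>)" using m(4) by simp
    then have m0: "0 < m" using m(2) by linarith
    have e1: "r / (pi * r * exp (-2*a) * exp (2*\<eta>)) = T * exp (-2*\<eta>)"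
      using e1[OF m(4)] by (simp add: T_def)
    have e2: "r / (pi * r * exp (-2*a) * exp (-2*\<eta>)) = T * exp (2*\<eta>)"
      using e2[OF m(4)] by (simp add: T_def)
    have "r / (pi * r * exp (-2*a) * exp (2*\<eta>)) \<le> r / m"
      using m m0 by (intro divide_left_mono) auto
    moreover have "r / m \<le> r / (pi * r * exp (-2*a) * exp (-2*\<eta>))"
      using m m0 lpos by (intro divide_left_mono) auto
    ultimately show ?case using m(1,4) m0 e1 e2
      by (intro exI[of _ "r / m"]) (simp add: divide_ennreal)
  qed
  have lim2: "((\<lambda>r. ennreal r / gq r) \<longlongrightarrow> ennreal T) (at_right 0)"
    unfolding order_tendsto_iff
  proof (intro conjI allI impI)
    fix y assume y: "y < ennreal T"
    then obtain y' where y': "y = ennreal y'" "0 \<le> y'" by (cases y rule: ennreal_cases) auto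
    have "y' < T" using y y' by (simp add: ennreal_less_iff)
    then obtain \<eta> where \<eta>: "\<eta> > 0" "y' < T * exp (-2*\<eta>)" using exists_eta1 by blast
    show "\<forall>\<^sub>F r in at_right 0. y < ennreal r / gq r"
      using KEY2[OF \<eta>(1)]
    proof eventually_elim
      case (elim r)
      then obtain q where "ennreal r / gq r = ennreal q" "T * exp (-2*\<eta>) \<le> q" by blast
      then show ?case using \<eta> y' by (simp add: ennreal_less_iff)
    qed
  next
    fix y assume y: "ennreal T < y"
    show "\<forall>\<^sub>F r in at_right 0. ennreal r / gq r < y"
    proof (cases y rule: ennreal_cases)
      case (real y')
      then have "T < y'" using y less_imp_le[OF T0] by (simp add: ennreal_less_iff)
      then obtain \<eta> where \<eta>: "\<eta> > 0" "T * exp (2*\<eta>) < y'" using exists_eta2 by blast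
      show ?thesis using KEY2[OF \<eta>(1)]
      proof eventually_elim
        case (elim r)
        then obtain q where "ennreal r / gq r = ennreal q" "q \<le> T * exp (2*\<eta>)" by blast
        then have q: "ennreal r / gq r = ennreal q" "q < y'" using \<eta> by auto
        have "0 < T * exp (2*\<eta>)" using T0 by simp
        then have "0 < y'" using \<eta> by linarith
        then show ?case using q real by (simp add: ennreal_lessI)
      qed
    next
      case top
      show ?thesis using KEY2[of 1, OF zero_less_one]
      proof eventually_elim
        case (elim r)
        then obtain q where "ennreal r / gq r = ennreal q" by blast
        then show ?case using top by simp
      qed
    qed
  qed
  show ?thesis
    using lim1 lim2 by (intro exI[of _ "exp a"]) (simp add: gq_def T_def)
qed

end
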